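(* Let $\mathbf P=\mathbf u\mathbf v^{\mathsf T}\in\mathbb R^{\mathsf M\times\mathsf N}$ with $\mathbf u\in\mathbb R^{\mathsf M}$, $\mathbf v\in\mathbb R^{\mathsf N}$, and let $j_{\max}\in\arg\max_{j}\mathbf v_j$, $j_{\min}\in\arg\min_j\mathbf v_j$. Let $x,y\in[\mathsf M]$ be users with $\mathbf u_x\ge0$ and $\mathbf u_y<0$. Let $\Delta>0$, let $S_x,S_y\subseteq[\mathsf N]$ with $j_{\max}\in S_x$ and $j_{\min}\in S_y$, and let $\widetilde{\mathbf P}\in\mathbb R^{\mathsf M\times\mathsf N}$ satisfy $|\widetilde{\mathbf P}_{xj}-\mathbf P_{xj}|\le\Delta/2$ for all $j\in S_x$ and $|\widetilde{\mathbf P}_{yj}-\mathbf P_{yj}|\le\Delta/2$ for all $j\in S_y$. Define $T_x=\{j\in S_x:\widetilde{\mathbf P}_{xj}+\Delta>\max_{t\in S_x}\widetilde{\mathbf P}_{xt}\}$ and $T_y=\{j\in S_y:\widetilde{\mathbf P}_{yj}+\Delta>\max_{t\in S_y}\widetilde{\mathbf P}_{yt}\}$. If $T_x\cap T_y\neq\emptyset$, then $\max_{t\in[\mathsf N]}\mathbf P_{xt}-\min_{t\in[\mathsf N]}\mathbf P_{xt}\le4\Delta$ or $\max_{t\in[\mathsf N]}\mathbf P_{yt}-\min_{t\in[\mathsf N]}\mathbf P_{yt}\le4\Delta$. *)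

theory Defs
  imports Main "HOL-Analysis.Analysis"
begin

text \<open>Matrices are represented as functions nat => nat => real, with row index in {..<M}
  and column index in {..<N}. The rank-one matrix u v^T:\<close>

definition outer :: "(nat \<Rightarrow> real) \<Rightarrow> (nat \<Rightarrow> real) \<Rightarrow> nat \<Rightarrow> nat \<Rightarrow> real" where
  "outer u v = (\<lambda>i j. u i * v j)"

end

theory Submission
  imports Defs
begin

theorem mainTheorem7:
  fixes M N :: nat
    and u v :: "nat \<Rightarrow> real"
    and P Pt :: "nat \<Rightarrow> nat \<Rightarrow> real"
    and jmax jmin x y :: nat
    and \<Delta> :: real
    and Sx Sy Tx Ty :: "nat set"
  assumes P_def: "P = outer u v"
    and jmax: "jmax < N" "v jmax = Max (v ` {..<N})"
    and jmin: "jmin < N" "v jmin = Min (v ` {..<N})"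
    and xy: "x < M" "y < M" "u x \<ge> 0" "u y < 0"
    and Delta: "\<Delta> > 0"
    and Sx: "Sx \<subseteq> {..<N}" "jmax \<in> Sx"
    and Sy: "Sy \<subseteq> {..<N}" "jmin \<in> Sy"
    and estx: "\<forall>j\<in>Sx. \<bar>Pt x j - P x j\<bar> \<le> \<Delta> / 2"
    and esty: "\<forall>j\<in>Sy. \<bar>Pt y j - P y j\<bar> \<le> \<Delta> / 2"
    and Tx_def: "Tx = {j \<in> Sx. Pt x j + \<Delta> > Max ((\<lambda>t. Pt x t) ` Sx)}"
    and Ty_def: "Ty = {j \<in> Sy. Pt y j + \<Delta> > Max ((\<lambda>t. Pt y t) ` Sy)}"
    and inter: "Tx \<inter> Ty \<noteq> {}"
  shows "Max ((\<lambda>t. P x t) ` {..<N}) - Min ((\<lambda>t. P x t) ` {..<N}) \<le> 4 * \<Delta>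
       \<or> Max ((\<lambda>t. P y t) ` {..<N}) - Min ((\<lambda>t. P y t) ` {..<N}) \<le> 4 * \<Delta>"
proof -
  have N0: "{..<N} \<noteq> {}" using jmax by auto
  have vb: "\<And>t. t < N \<Longrightarrow> v jmin \<le> v t \<and> v t \<le> v jmax"
    using jmax jmin by (simp add: Min_le Max_ge)
  have Pe: "\<And>i t. P i t = u i * v t" by (simp add: P_def outer_def)
  obtain j where j: "j \<in> Tx" "j \<in> Ty" using inter by blast
  have fSx: "finite Sx" using Sx finite_subset by blast
  have fSy: "finite Sy" using Sy finite_subset by blast
  have mx: "Max ((\<lambda>t. Pt x t) ` Sx) \<ge> Pt x jmax" using fSx Sx by simp
  have my: "Max ((\<lambda>t. Pt y t) ` Sy) \<ge> Pt y jmin" using fSy Sy by simp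
  have jx: "j \<in> Sx" "Pt x j + \<Delta> > Max ((\<lambda>t. Pt x t) ` Sx)" using j Tx_def by auto
  have jy: "j \<in> Sy" "Pt y j + \<Delta> > Max ((\<lambda>t. Pt y t) ` Sy)" using j Ty_def by auto
  have e1: "\<bar>Pt x j - u x * v j\<bar> \<le> \<Delta>/2" using estx jx Pe by auto
  have e2: "\<bar>Pt x jmax - u x * v jmax\<bar> \<le> \<Delta>/2" using estx Sx Pe by auto
  have e3: "\<bar>Pt y j - u y * v j\<bar> \<le> \<Delta>/2" using esty jy Pe by auto
  have e4: "\<bar>Pt y jmin - u y * v jmin\<bar> \<le> \<Delta>/2" using esty Sy Pe by auto
  have A: "u x * (v jmax - v j) < 2*\<Delta>" using e1 e2 mx jx(2) unfolding abs_le_iff by (simp add: right_diff_distrib)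
  have B: "(- u y) * (v j - v jmin) < 2*\<Delta>" using e3 e4 my jy(2) unfolding abs_le_iff by (simp add: right_diff_distrib)
  have Mx: "Max ((\<lambda>t. P x t) ` {..<N}) \<le> u x * v jmax"
    using N0 vb xy by (auto simp: Pe intro: mult_left_mono)
  have mnx: "Min ((\<lambda>t. P x t) ` {..<N}) \<ge> u x * v jmin"
    using N0 vb xy by (auto simp: Pe intro: mult_left_mono)
  have My: "Max ((\<lambda>t. P y t) ` {..<N}) \<le> u y * v jmin"
    using N0 vb xy by (auto simp: Pe intro: mult_left_mono_neg)
  have mny: "Min ((\<lambda>t. P y t) ` {..<N}) \<ge> u y * v jmax"
    using N0 vb xy by (auto simp: Pe intro: mult_left_mono_neg)
  have jN: "j < N" using jx Sx by auto
  have d1: "v jmax - v j \<ge> 0" "v j - v jmin \<ge> 0" using vb[OF jN] by auto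
  show ?thesis
  proof (cases "u x \<le> - u y")
    case True
    have "u x * (v j - v jmin) \<le> (- u y) * (v j - v jmin)"
      using True d1 by (intro mult_right_mono) auto
    hence "u x * (v jmax - v jmin) \<le> 4 * \<Delta>" using A B by (simp add: algebra_simps)
    hence "Max ((\<lambda>t. P x t) ` {..<N}) - Min ((\<lambda>t. P x t) ` {..<N}) \<le> 4 * \<Delta>"
      using Mx mnx by (simp add: algebra_simps)
    thus ?thesis by blast
  next
    case False
    have "(- u y) * (v jmax - v j) \<le> u x * (v jmax - v j)"
      using False d1 by (intro mult_right_mono) auto
    hence "(- u y) * (v jmax - v jmin) \<le> 4 * \<Delta>" using A B by (simp add: algebra_simps)
    hence "Max ((\<lambda>t. P y t) ` {..<N}) - Min ((\<lambda>t. P y t) ` {..<N}) \<le> 4 * \<Delta>"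
      using My mny by (simp add: algebra_simps)
    thus ?thesis by blast
  qed
qed

end
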